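(* Let $\underline{A}=(A_1,\dots,A_k)$ be a locally constant cocycle over a Bernoulli shift on $\{1,\dots,k\}^{\mathbb Z}$ with $\mathrm{rank}(A_i)=1$ for all $i$. Then either $d(\mathscr{K}(\underline{A}),\mathscr{R}(\underline{A}))>0$ and $\underline{A}$ is projectively uniformly hyperbolic, or $d(\mathscr{K}(\underline{A}),\mathscr{R}(\underline{A}))=0$, $\underline{A}$ admits a null word, and $L_1(\underline{A})=-\infty$.
   Context: Base: $X=\{1,\dots,k\}^{\mathbb Z}$ with Bernoulli measure $p^{\mathbb Z}$ ($p_i>0$), $\sigma$ the shift; cocycle $F(\omega,v)=(\sigma\omega,A_{\omega_1}v)$, $A^n(\omega)=A_{\omega_n}\cdots A_{\omega_1}$, $L_1=\lim_n\frac1n\log\|A^n(\omega)\|\in[-\infty,\infty)$ a.e. $\mathscr{K}(\underline A)=\{\mathrm{Ker}A_i\}_i$ and $\mathscr{R}(\underline A)=\{\mathrm{Range}A_i\}_i$, finite subsets of the projective line $\mathbb{P}^1$, and $d$ is the distance between these sets for a standard metric on $\mathbb{P}^1$. A null word is a finite word $\omega_1\dots\omega_n$ with $A_{\omega_n}\cdots A_{\omega_1}=0$. Projectively uniformly hyperbolic: continuous invariant line fields $E_0,E_1$ with $\mathbb R^2=E_0(\omega)\oplus E_1(\omega)$ and $n$ with $\|A^n(\omega)|_{E_0}\|<\|A^n(\omega)|_{E_1}\|$ for all $\omega$. *)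

theory Defs
  imports "HOL-Analysis.Analysis" "HOL-Probability.Probability"
begin

type_synonym mat2 = "real^2^2"

text \<open>The shift space X = {1..k}^Z, as sequences indexed by the integers.
  It carries the product topology (Function_Topology) of the discrete topology on nat.\<close>
definition shift_space :: "nat \<Rightarrow> (int \<Rightarrow> nat) set" where
  "shift_space k = {\<omega>. \<forall>i. \<omega> i \<in> {1..k}}"

definition shift :: "(int \<Rightarrow> nat) \<Rightarrow> (int \<Rightarrow> nat)" where
  "shift \<omega> = (\<lambda>i. \<omega> (i + 1))"

definition bernoulli_measure :: "nat pmf \<Rightarrow> (int \<Rightarrow> nat) measure" where
  "bernoulli_measure p = PiM UNIV (\<lambda>_::int. measure_pmf p)"

fun cocycle :: "(nat \<Rightarrow> mat2) \<Rightarrow> nat \<Rightarrow> (int \<Rightarrow> nat) \<Rightarrow> mat2" where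
  "cocycle A 0 \<omega> = mat 1"
| "cocycle A (Suc n) \<omega> = A (\<omega> (int (Suc n))) ** cocycle A n \<omega>"

definition matnorm :: "mat2 \<Rightarrow> real" where
  "matnorm M = onorm (\<lambda>x. M *v x)"

definition eln :: "real \<Rightarrow> ereal" where
  "eln x = (if x = 0 then -\<infinity> else ereal (ln x))"

definition L1_minus_infty :: "nat pmf \<Rightarrow> (nat \<Rightarrow> mat2) \<Rightarrow> bool" where
  "L1_minus_infty p A \<longleftrightarrow>
     (AE \<omega> in bernoulli_measure p.
        ((\<lambda>n. ereal (1 / real n) * eln (matnorm (cocycle A n \<omega>))) \<longlongrightarrow> -\<infinity>) sequentially)"

text \<open>Lines (points of P^1) are 1-dimensional subspaces of R^2.\<close>
definition ker_line :: "mat2 \<Rightarrow> (real^2) set" where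
  "ker_line M = {v. M *v v = 0}"

definition range_line :: "mat2 \<Rightarrow> (real^2) set" where
  "range_line M = range (\<lambda>v. M *v v)"

text \<open>Standard metric on P^1: the sine of the angle between two lines, i.e. the
  distance from a unit vector of one line to the other line.\<close>
definition pdist :: "(real^2) set \<Rightarrow> (real^2) set \<Rightarrow> real" where
  "pdist L M = (INF u \<in> {u \<in> L. norm u = 1}. infdist u M)"

definition kernels :: "nat \<Rightarrow> (nat \<Rightarrow> mat2) \<Rightarrow> (real^2) set set" where
  "kernels k A = ker_line ` A ` {1..k}"

definition ranges :: "nat \<Rightarrow> (nat \<Rightarrow> mat2) \<Rightarrow> (real^2) set set" where
  "ranges k A = range_line ` A ` {1..k}"

definition setdist_P1 :: "(real^2) set set \<Rightarrow> (real^2) set set \<Rightarrow> real" where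
  "setdist_P1 K R = (INF LM \<in> K \<times> R. pdist (fst LM) (snd LM))"

definition word_prod :: "(nat \<Rightarrow> mat2) \<Rightarrow> nat list \<Rightarrow> mat2" where
  "word_prod A w = foldl (\<lambda>M i. A i ** M) (mat 1) w"

definition has_null_word :: "nat \<Rightarrow> (nat \<Rightarrow> mat2) \<Rightarrow> bool" where
  "has_null_word k A \<longleftrightarrow> (\<exists>w. w \<noteq> [] \<and> set w \<subseteq> {1..k} \<and> word_prod A w = 0)"

text \<open>A line field is represented by the orthogonal projection onto the line;
  continuity of the line field (as a map into P^1) is continuity of the projection.\<close>
definition line_proj :: "mat2 \<Rightarrow> bool" where
  "line_proj P \<longleftrightarrow> P ** P = P \<and> transpose P = P \<and> rank P = 1"

definition proj_unif_hyperbolic :: "nat \<Rightarrow> (nat \<Rightarrow> mat2) \<Rightarrow> bool" where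
  "proj_unif_hyperbolic k A \<longleftrightarrow>
     (\<exists>E0 E1 :: (int \<Rightarrow> nat) \<Rightarrow> mat2.
        (\<forall>\<omega>\<in>shift_space k. line_proj (E0 \<omega>) \<and> line_proj (E1 \<omega>)) \<and>
        continuous_on (shift_space k) E0 \<and> continuous_on (shift_space k) E1 \<and>
        (\<forall>\<omega>\<in>shift_space k. range_line (E0 \<omega>) \<inter> range_line (E1 \<omega>) = {0}) \<and>
        (\<forall>\<omega>\<in>shift_space k. \<forall>v.
           A (\<omega> 1) *v (E0 \<omega> *v v) \<in> range_line (E0 (shift \<omega>)) \<and>
           A (\<omega> 1) *v (E1 \<omega> *v v) \<in> range_line (E1 (shift \<omega>))) \<and>
        (\<exists>n. \<forall>\<omega>\<in>shift_space k.
           matnorm (cocycle A n \<omega> ** E0 \<omega>) < matnorm (cocycle A n \<omega> ** E1 \<omega>)))"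

end

theory Submission
  imports Defs
begin

definition line :: "(real^2) set \<Rightarrow> bool" where
  "line L \<longleftrightarrow> subspace L \<and> dim L = 1"

lemma line_eq:
  assumes "line L" "line M" "x \<in> L" "x \<in> M" "x \<noteq> 0"
  shows "L = M"
proof -
  have dx: "dim (span {x}) = 1" using assms(5)
    by (simp add: dim_span_eq_card_independent)
  have "span {x} = L"
    using assms dx by (intro subspace_dim_equal) (auto simp: line_def span_minimal)
  moreover have "span {x} = M"
    using assms dx by (intro subspace_dim_equal) (auto simp: line_def span_minimal)
  ultimately show ?thesis by simp
qed

lemma line_nonzero:
  assumes "line L" obtains a where "a \<in> L" "a \<noteq> 0"
  using assms unfolding line_def by (metis dim_eq_0 subsetI singletonI zero_neq_one)

lemma line_unit:
  assumes "line L" obtains u where "u \<in> L" "norm u = 1"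
proof -
  obtain a where a: "a \<in> L" "a \<noteq> 0" using line_nonzero assms by blast
  have "a /\<^sub>R norm a \<in> L" using assms a unfolding line_def by (simp add: subspace_scale)
  then show ?thesis using that a by auto
qed

lemma range_line_rank1:
  assumes "rank M = 1" shows "line (range_line M)"
  using assms unfolding line_def range_line_def
  by (simp add: rank_dim_range linear_subspace_image)

lemma ker_line_rank1:
  fixes M :: mat2
  assumes "rank M = 1" shows "line (ker_line M)"
proof -
  have sub: "subspace (ker_line M)" unfolding ker_line_def
    by (simp add: subspace_def matrix_vector_right_distrib matrix_vector_mult_scaleR)
  have "rank M \<noteq> CARD(2)" using assms by simp
  then obtain x where "x \<noteq> 0" "M *v x = 0" using matrix_nonfull_linear_equations_eq by blast
  then have d0: "dim (ker_line M) \<noteq> 0" by (auto simp: ker_line_def)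
  have "M \<noteq> 0" using assms rank_0 by auto
  then obtain y where y: "M *v y \<noteq> 0" by (metis matrix_eq matrix_vector_mult_0)
  have "dim (ker_line M) \<noteq> 2"
  proof
    assume "dim (ker_line M) = 2"
    then have "span (ker_line M) = UNIV" using dim_eq_full[of "ker_line M"] by simp
    then have "ker_line M = UNIV" using sub by (metis span_eq_iff)
    then show False using y by (auto simp: ker_line_def)
  qed
  moreover have "dim (ker_line M) \<le> 2" using dim_subset_UNIV_cart[of "ker_line M"] by simp
  ultimately show ?thesis using d0 sub unfolding line_def by linarith
qed

lemma line_span:
  assumes "line L" "u \<in> L" "u \<noteq> 0" shows "L = span {u}"
proof -
  have dx: "dim (span {u}) = 1" using assms(3)
    by (simp add: dim_span_eq_card_independent)
  show ?thesis
    using assms dx by (intro subspace_dim_equal[symmetric]) (auto simp: line_def span_minimal)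
qed

lemma pdist_self:
  assumes "line L" shows "pdist L L = 0"
proof -
  obtain u where u: "u \<in> L" "norm u = 1" using line_unit assms by blast
  have "pdist L L \<le> infdist u L" unfolding pdist_def
    by (rule cINF_lower) (auto simp: u bdd_below_def intro!: exI[of _ 0] infdist_nonneg)
  moreover have "0 \<le> pdist L L" unfolding pdist_def
    using u by (intro cINF_greatest) (auto simp: infdist_nonneg)
  ultimately show ?thesis using u by simp
qed

lemma pdist_pos:
  assumes "line L" "line M" "L \<noteq> M" shows "pdist L M > 0"
proof -
  define S where "S = {u \<in> L. norm u = 1}"
  have cl: "closed L" "closed M" using assms closed_subspace unfolding line_def by auto
  have "S = L \<inter> sphere 0 1" by (auto simp: S_def)
  then have cS: "compact S" using cl by (simp add: closed_Int_compact)
  obtain u where u: "u \<in> L" "norm u = 1" using line_unit assms by blast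
  then have Sne: "S \<noteq> {}" by (auto simp: S_def)
  have M0: "0 \<in> M" using assms(2) unfolding line_def by (simp add: subspace_0)
  have pos: "infdist v M > 0" if "v \<in> S" for v
  proof -
    have "v \<noteq> 0" using that by (auto simp: S_def)
    then have "v \<notin> M" using line_eq[OF assms(1,2), of v] that assms(3) by (auto simp: S_def)
    then show ?thesis using infdist_pos_not_in_closed[OF cl(2)] M0 by auto
  qed
  obtain x where x: "x \<in> S" "\<forall>y\<in>S. infdist x M \<le> infdist y M"
    using continuous_attains_inf[OF cS Sne, of "\<lambda>v. infdist v M"]
      continuous_on_infdist[OF continuous_on_id, of S M] by auto
  have "infdist x M \<le> pdist L M" unfolding pdist_def S_def[symmetric]
    using x Sne by (intro cINF_greatest) auto
  then show ?thesis using pos[OF x(1)] by simp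
qed

definition uproj :: "real^2 \<Rightarrow> mat2" where
  "uproj u = (\<chi> r c. u$r * u$c)"

lemma uproj_mult: "uproj u *v x = (u \<bullet> x) *\<^sub>R u"
  by (simp add: vec_eq_iff uproj_def matrix_vector_mult_def inner_vec_def sum_distrib_left
      sum_distrib_right mult.commute mult.left_commute)

lemma range_uproj:
  assumes "norm u = 1" shows "range_line (uproj u) = span {u}"
proof -
  have "(u \<bullet> (t *\<^sub>R u)) = t" for t using assms by (simp add: inner_commute power2_norm_eq_inner[symmetric])
  then have "t *\<^sub>R u \<in> range_line (uproj u)" for t unfolding range_line_def uproj_mult
    by (metis rangeI)
  then show ?thesis unfolding range_line_def uproj_mult span_singleton by auto
qed

lemma line_proj_uproj:
  assumes "norm u = 1" shows "line_proj (uproj u)"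
proof -
  have uu: "u \<bullet> u = 1" using assms by (simp add: power2_norm_eq_inner[symmetric])
  have "uproj u ** uproj u = uproj u"
    by (rule matrix_eq[THEN iffD2]) (simp add: matrix_vector_mul_assoc[symmetric] uproj_mult uu)
  moreover have "transpose (uproj u) = uproj u"
    by (simp add: vec_eq_iff transpose_def uproj_def mult.commute)
  moreover have "rank (uproj u) = 1"
    using range_uproj[OF assms] assms unfolding rank_dim_range range_line_def
    by (auto simp: dim_span_eq_card_independent)
  ultimately show ?thesis unfolding line_proj_def by blast
qed

lemma bl_mat: "bounded_linear (\<lambda>x. (M::mat2) *v x)"
  by (simp add: linear_conv_bounded_linear)

lemma matnorm_0: "matnorm 0 = 0"
  by (simp add: matnorm_def onorm_zero)

lemma matnorm_pos: "M \<noteq> 0 \<Longrightarrow> matnorm M > 0"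
  unfolding matnorm_def using onorm_pos_lt[OF bl_mat] by (metis matrix_eq matrix_vector_mult_0)

lemma cocycle_zero:
  assumes "\<omega> (int m + 1) = j" "\<omega> (int m + 2) = i" "A i ** A j = 0" "n \<ge> m + 2"
  shows "cocycle A n \<omega> = 0"
  using assms(4)
proof (induction n rule: dec_induct)
  case base
  have "cocycle A (Suc (Suc m)) \<omega> = (A i ** A j) ** cocycle A m \<omega>"
    using assms(1,2) by (simp add: matrix_mul_assoc add.commute)
  then show ?case using assms(3) by simp
next
  case (step n)
  then show ?case by simp
qed

lemma tendsto_of_zero:
  assumes "\<forall>n\<ge>N. cocycle A n \<omega> = 0"
  shows "((\<lambda>n. ereal (1 / real n) * eln (matnorm (cocycle A n \<omega>))) \<longlongrightarrow> -\<infinity>) sequentially"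
proof (rule tendsto_eventually)
  show "\<forall>\<^sub>F n in sequentially. ereal (1 / real n) * eln (matnorm (cocycle A n \<omega>)) = -\<infinity>"
    using eventually_ge_at_top[of "Suc N"]
  proof eventually_elim
    case (elim n)
    then show ?case using assms by (simp add: matnorm_0 eln_def)
  qed
qed

lemma L1_null:
  assumes pi: "pmf p i > 0" and pj: "pmf p j > 0" and AA: "A i ** A j = 0"
  shows "L1_minus_infty p A"
proof -
  interpret PS: product_prob_space "\<lambda>_::int. measure_pmf p" "UNIV :: int set"
    by (rule product_prob_spaceI) (simp add: measure_pmf.prob_space_axioms)
  define M where "M = bernoulli_measure p"
  have M: "M = PiM UNIV (\<lambda>_::int. measure_pmf p)" by (simp add: M_def bernoulli_measure_def)
  define a where "a b = 2 * int b + 1" for b :: nat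
  define K where "K b = {a b, a b + 1}" for b
  define E where "E b = {\<omega> \<in> space M. \<not> (\<omega> (a b) = j \<and> \<omega> (a b + 1) = i)}" for b
  define q where "q = pmf p j * pmf p i"
  have q: "0 < q" "q \<le> 1" using pi pj by (auto simp: q_def pmf_le_1 mult_le_one)
  have indc: "PS.indep_vars (\<lambda>_. measure_pmf p) (\<lambda>t \<omega>. \<omega> t) UNIV"
  proof (subst PS.indep_vars_iff_distr_eq_PiM')
    show "distr (Pi\<^sub>M UNIV (\<lambda>_::int. measure_pmf p)) (Pi\<^sub>M UNIV (\<lambda>_::int. measure_pmf p)) (\<lambda>x. \<lambda>t\<in>UNIV. x t) =
      Pi\<^sub>M UNIV (\<lambda>t::int. distr (Pi\<^sub>M UNIV (\<lambda>_::int. measure_pmf p)) (measure_pmf p) (\<lambda>\<omega>. \<omega> t))"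
    proof -
      have "(\<lambda>t::int. distr (Pi\<^sub>M UNIV (\<lambda>_::int. measure_pmf p)) (measure_pmf p) (\<lambda>\<omega>. \<omega> t)) = (\<lambda>_. measure_pmf p)"
        using PS.PiM_component[OF UNIV_I] by (simp add: fun_eq_iff)
      then show ?thesis by (simp add: restrict_UNIV distr_id2)
    qed
  qed auto
  have indK: "PS.indep_vars (\<lambda>b. PiM (K b) (\<lambda>_. measure_pmf p)) (\<lambda>b \<omega>. restrict (\<lambda>t. \<omega> t) (K b)) UNIV"
    by (rule PS.indep_vars_restrict[OF indc]) (auto simp: disjoint_family_on_def K_def a_def)
  have indE': "PS.indep_events (\<lambda>b. {\<omega> \<in> space M. \<not> ((restrict (\<lambda>t. \<omega> t) (K b)) (a b) = j \<and> (restrict (\<lambda>t. \<omega> t) (K b)) (a b + 1) = i)}) UNIV"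
    unfolding M
  proof (rule PS.indep_eventsI_indep_vars[OF indK])
    fix b :: nat
    have "a b \<in> K b" "a b + 1 \<in> K b" by (auto simp: K_def)
    then show "{x \<in> space (Pi\<^sub>M (K b) (\<lambda>_. measure_pmf p)). \<not> (x (a b) = j \<and> x (a b + 1) = i)} \<in> sets (Pi\<^sub>M (K b) (\<lambda>_. measure_pmf p))"
      by measurable
  qed
  have indE: "PS.indep_events E UNIV"
  proof -
    have "(\<lambda>b. {\<omega> \<in> space M. \<not> ((restrict (\<lambda>t. \<omega> t) (K b)) (a b) = j \<and> (restrict (\<lambda>t. \<omega> t) (K b)) (a b + 1) = i)}) = E"
      by (auto simp: E_def K_def fun_eq_iff)
    then show ?thesis using indE' by simp
  qed
  have Eev: "E b \<in> sets M" for b using indE unfolding PS.indep_events_def M by auto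
  have probE: "PS.prob (E b) = 1 - q" for b
  proof -
    define X where "X t = (if t = a b then {j} else {i})" for t
    have ne: "a b \<noteq> a b + 1" by simp
    have B: "prod_emb UNIV (\<lambda>_. measure_pmf p) {a b, a b + 1} (PiE {a b, a b + 1} X) = space M - E b"
      by (auto simp: prod_emb_def E_def M X_def space_PiM PiE_iff)
    have "PS.prob (prod_emb UNIV (\<lambda>_. measure_pmf p) {a b, a b + 1} (PiE {a b, a b + 1} X)) = q"
      by (subst PS.measure_PiM_emb) (auto simp: X_def q_def measure_pmf_single)
    then have "PS.prob (space M - E b) = q" using B by simp
    moreover have "PS.prob (space M - E b) = 1 - PS.prob (E b)"
      using Eev[of b] unfolding M by (simp add: PS.prob_compl)
    ultimately show ?thesis by simp
  qed
  define N where "N = (\<Inter>b. E b)"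
  have Nev: "N \<in> sets M" unfolding N_def using Eev by auto
  have bound: "PS.prob N \<le> (1 - q) ^ Suc n" for n
  proof -
    have "PS.prob N \<le> PS.prob (\<Inter>b\<in>{..<Suc n}. E b)"
      using Eev unfolding M
      by (intro PS.finite_measure_mono) (auto simp: N_def intro!: sets.finite_INT)
    also have "\<dots> = (\<Prod>b\<in>{..<Suc n}. PS.prob (E b))"
      using indE unfolding PS.indep_events_def by (metis UNIV_I empty_iff finite_lessThan lessThan_iff subsetI zero_less_Suc)
    also have "\<dots> = (1 - q) ^ Suc n" by (simp add: probE)
    finally show ?thesis .
  qed
  have lim: "(\<lambda>n. (1 - q) ^ Suc n) \<longlonglongrightarrow> 0"
    using q by (intro LIMSEQ_Suc LIMSEQ_power_zero) auto
  have "PS.prob N \<le> 0"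
    by (rule tendsto_le[OF _ lim tendsto_const]) (use bound in \<open>auto simp del: power_Suc\<close>)
  then have "PS.prob N = 0" by (meson measure_nonneg order_antisym)
  then have Nnull: "N \<in> null_sets M"
    using Nev unfolding M by (simp add: PS.emeasure_eq_measure null_sets_def)
  have "AE \<omega> in M. ((\<lambda>n. ereal (1 / real n) * eln (matnorm (cocycle A n \<omega>))) \<longlongrightarrow> -\<infinity>) sequentially"
  proof (rule AE_I'[OF Nnull], safe)
    fix \<omega> assume \<omega>: "\<omega> \<in> space M"
      and nt: "\<not> ((\<lambda>n. ereal (1 / real n) * eln (matnorm (cocycle A n \<omega>))) \<longlongrightarrow> -\<infinity>) sequentially"
    show "\<omega> \<in> N"
    proof (rule ccontr)
      assume "\<omega> \<notin> N"
      then obtain b where "\<omega> \<notin> E b" by (auto simp: N_def)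
      then have h: "\<omega> (int (2*b) + 1) = j" "\<omega> (int (2*b) + 2) = i" using \<omega>
        by (auto simp: E_def a_def add.assoc)
      have "\<forall>n\<ge>2*b+2. cocycle A n \<omega> = 0" using cocycle_zero[OF h AA] by blast
      then show False using nt tendsto_of_zero by blast
    qed
  qed
  then show ?thesis unfolding L1_minus_infty_def M_def by blast
qed

lemma pdist_nonneg:
  assumes "line L" shows "0 \<le> pdist L M"
proof -
  obtain u where u: "u \<in> L" "norm u = 1" using line_unit assms by blast
  show ?thesis unfolding pdist_def
    using u by (intro cINF_greatest) (auto simp: infdist_nonneg)
qed

lemma cont_coord: "continuous_on S (\<lambda>\<omega>::int\<Rightarrow>nat. (g::nat \<Rightarrow> mat2) (\<omega> t))"
proof -
  have g: "continuous_on UNIV g" by (simp add: continuous_on_def at_discrete)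
  have "continuous_on UNIV (\<lambda>\<omega>::int\<Rightarrow>nat. g (\<omega> t))"
    by (rule continuous_on_compose2[OF g continuous_on_product_coordinates]) auto
  then show ?thesis by (rule continuous_on_subset) auto
qed

lemma uproj_self: "norm u = 1 \<Longrightarrow> uproj u *v u = u"
  by (simp add: uproj_mult power2_norm_eq_inner[symmetric])

lemma zero_in_line: "line L \<Longrightarrow> 0 \<in> L"
  by (simp add: line_def subspace_0)

theorem theorem4p17:
  fixes k :: nat and p :: "nat pmf" and A :: "nat \<Rightarrow> real^2^2"
  assumes support: "set_pmf p = {1..k}"
    and rank1: "\<forall>i\<in>{1..k}. rank (A i) = 1"
  shows "(setdist_P1 (kernels k A) (ranges k A) > 0 \<and> proj_unif_hyperbolic k A)
       \<or> (setdist_P1 (kernels k A) (ranges k A) = 0 \<and> has_null_word k A \<and> L1_minus_infty p A)"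
proof -
  have ne: "{1..k} \<noteq> {}" using support set_pmf_not_empty by metis
  have lk: "line (ker_line (A i))" if "i \<in> {1..k}" for i using rank1 that ker_line_rank1 by blast
  have lr: "line (range_line (A i))" if "i \<in> {1..k}" for i using rank1 that range_line_rank1 by blast
  define F where "F = (\<lambda>LM. pdist (fst LM) (snd LM)) ` (kernels k A \<times> ranges k A)"
  have Ffin: "finite F" "F \<noteq> {}" using ne by (auto simp: F_def kernels_def ranges_def)
  have sd: "setdist_P1 (kernels k A) (ranges k A) = Min F"
    unfolding setdist_P1_def F_def[symmetric] using Ffin by (simp add: cInf_eq_Min)
  have Fel: "\<exists>i\<in>{1..k}. \<exists>j\<in>{1..k}. x = pdist (ker_line (A i)) (range_line (A j))" if "x \<in> F" for x
    using that unfolding F_def kernels_def ranges_def by force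
  have Fin: "pdist (ker_line (A i)) (range_line (A j)) \<in> F" if "i \<in> {1..k}" "j \<in> {1..k}" for i j
    using that by (force simp: F_def kernels_def ranges_def)
  show ?thesis
  proof (cases "\<exists>i\<in>{1..k}. \<exists>j\<in>{1..k}. ker_line (A i) = range_line (A j)")
    case True
    then obtain i j where ij: "i \<in> {1..k}" "j \<in> {1..k}" "ker_line (A i) = range_line (A j)" by blast
    have "Min F = 0"
    proof (rule Min_eqI[OF Ffin(1)])
      show "0 \<in> F" using Fin[OF ij(1,2)] ij(3) pdist_self[OF lr[OF ij(2)]] by simp
      fix y assume "y \<in> F" then show "0 \<le> y" using Fel pdist_nonneg lk by blast
    qed
    moreover have AA: "A i ** A j = 0"
    proof (rule matrix_eq[THEN iffD2], intro allI)
      fix x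
      have "A j *v x \<in> ker_line (A i)" using ij(3) by (simp add: range_line_def)
      then show "(A i ** A j) *v x = 0 *v x"
        by (simp add: matrix_vector_mul_assoc[symmetric] ker_line_def)
    qed
    moreover have "has_null_word k A" unfolding has_null_word_def
      by (rule exI[of _ "[j, i]"]) (use ij AA in \<open>simp add: word_prod_def\<close>)
    moreover have "L1_minus_infty p A"
      by (rule L1_null[OF _ _ AA]) (use ij support in \<open>auto simp: pmf_positive\<close>)
    ultimately show ?thesis using sd by simp
  next
    case False
    have "Min F > 0" using Ffin
    proof (subst Min_gr_iff, simp_all, intro ballI)
      fix y assume "y \<in> F"
      then show "0 < y" using Fel False pdist_pos lk lr by metis
    qed
    moreover have "proj_unif_hyperbolic k A"
    proof -
      define ku where "ku i = (SOME u. u \<in> ker_line (A i) \<and> norm u = 1)" for i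
      define ru where "ru i = (SOME u. u \<in> range_line (A i) \<and> norm u = 1)" for i
      have ku: "ku i \<in> ker_line (A i)" "norm (ku i) = 1" if "i \<in> {1..k}" for i
        using someI_ex[of "\<lambda>u. u \<in> ker_line (A i) \<and> norm u = 1"] line_unit[OF lk[OF that]]
        unfolding ku_def by blast+
      have ru: "ru i \<in> range_line (A i)" "norm (ru i) = 1" if "i \<in> {1..k}" for i
        using someI_ex[of "\<lambda>u. u \<in> range_line (A i) \<and> norm u = 1"] line_unit[OF lr[OF that]]
        unfolding ru_def by blast+
      have rku: "range_line (uproj (ku i)) = ker_line (A i)" if "i \<in> {1..k}" for i
      proof -
        have "ku i \<noteq> 0" using ku(2)[OF that] by auto
        then show ?thesis using range_uproj[OF ku(2)[OF that]] line_span[OF lk[OF that] ku(1)[OF that]] by simp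
      qed
      have rru: "range_line (uproj (ru i)) = range_line (A i)" if "i \<in> {1..k}" for i
      proof -
        have "ru i \<noteq> 0" using ru(2)[OF that] by auto
        then show ?thesis using range_uproj[OF ru(2)[OF that]] line_span[OF lr[OF that] ru(1)[OF that]] by simp
      qed
      define E0 where "E0 \<omega> = uproj (ku (\<omega> (1::int)))" for \<omega> :: "int \<Rightarrow> nat"
      define E1 where "E1 \<omega> = uproj (ru (\<omega> (0::int)))" for \<omega> :: "int \<Rightarrow> nat"
      have inS: "\<omega> 0 \<in> {1..k}" "\<omega> 1 \<in> {1..k}" if "\<omega> \<in> shift_space k" for \<omega>
        using that by (auto simp: shift_space_def)
      have disj: "ker_line (A i) \<inter> range_line (A j) = {0}" if "i \<in> {1..k}" "j \<in> {1..k}" for i j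
      proof -
        have "x = 0" if "x \<in> ker_line (A i)" "x \<in> range_line (A j)" for x
          using line_eq[OF lk lr that] False \<open>i \<in> _\<close> \<open>j \<in> _\<close> by blast
        then show ?thesis using zero_in_line lk lr that by blast
      qed
      have AE0: "A i ** uproj (ku i) = 0" if "i \<in> {1..k}" for i
      proof (rule matrix_eq[THEN iffD2], intro allI)
        fix x
        show "(A i ** uproj (ku i)) *v x = 0 *v x"
          using ku(1)[OF that]
          by (simp add: matrix_vector_mul_assoc[symmetric] uproj_mult ker_line_def matrix_vector_mult_scaleR)
      qed
      have AE1: "A i ** uproj (ru j) \<noteq> 0" if "i \<in> {1..k}" "j \<in> {1..k}" for i j
      proof
        assume "A i ** uproj (ru j) = 0"
        then have "A i *v ru j = 0"
          by (metis matrix_vector_mul_assoc uproj_self ru(2)[OF that(2)] matrix_vector_mult_0)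
        then have "ru j \<in> ker_line (A i) \<inter> range_line (A j)" using ru(1)[OF that(2)] by (simp add: ker_line_def)
        then show False using disj[OF that] ru(2)[OF that(2)] by auto
      qed
      have c1: "\<forall>\<omega>\<in>shift_space k. line_proj (E0 \<omega>) \<and> line_proj (E1 \<omega>)"
      proof
        fix \<omega> assume w: "\<omega> \<in> shift_space k"
        show "line_proj (E0 \<omega>) \<and> line_proj (E1 \<omega>)"
          using inS[OF w] ku ru line_proj_uproj by (simp add: E0_def E1_def)
      qed
      have c2: "\<forall>\<omega>\<in>shift_space k. range_line (E0 \<omega>) \<inter> range_line (E1 \<omega>) = {0}"
      proof
        fix \<omega> assume w: "\<omega> \<in> shift_space k"
        show "range_line (E0 \<omega>) \<inter> range_line (E1 \<omega>) = {0}"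
          using inS[OF w] rku rru disj by (simp add: E0_def E1_def)
      qed
      have c3: "continuous_on (shift_space k) E0" unfolding E0_def by (rule cont_coord)
      have c4: "continuous_on (shift_space k) E1" unfolding E1_def by (rule cont_coord)
      have c5: "\<forall>\<omega>\<in>shift_space k. \<forall>v.
           A (\<omega> 1) *v (E0 \<omega> *v v) \<in> range_line (E0 (shift \<omega>)) \<and>
           A (\<omega> 1) *v (E1 \<omega> *v v) \<in> range_line (E1 (shift \<omega>))"
      proof (intro ballI allI conjI)
        fix \<omega> v assume w: "\<omega> \<in> shift_space k"
        have "A (\<omega> 1) *v (E0 \<omega> *v v) = 0"
          using AE0[OF inS(2)[OF w]] by (simp add: E0_def matrix_vector_mul_assoc)
        moreover have "0 \<in> range_line (E0 (shift \<omega>))" unfolding range_line_def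
          by (metis matrix_vector_mult_0_right rangeI)
        ultimately show "A (\<omega> 1) *v (E0 \<omega> *v v) \<in> range_line (E0 (shift \<omega>))" by simp
        have "shift \<omega> 0 = \<omega> 1" by (simp add: shift_def)
        then have "range_line (E1 (shift \<omega>)) = range_line (A (\<omega> 1))"
          using rru[OF inS(2)[OF w]] by (simp add: E1_def)
        then show "A (\<omega> 1) *v (E1 \<omega> *v v) \<in> range_line (E1 (shift \<omega>))"
          by (simp add: range_line_def)
      qed
      have c6: "\<exists>n. \<forall>\<omega>\<in>shift_space k. matnorm (cocycle A n \<omega> ** E0 \<omega>) < matnorm (cocycle A n \<omega> ** E1 \<omega>)"
      proof (intro exI[of _ 1] ballI)
        fix \<omega> assume w: "\<omega> \<in> shift_space k"
        show "matnorm (cocycle A 1 \<omega> ** E0 \<omega>) < matnorm (cocycle A 1 \<omega> ** E1 \<omega>)"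
          using AE0[OF inS(2)[OF w]] AE1[OF inS(2)[OF w] inS(1)[OF w]] matnorm_pos matnorm_0
          by (simp add: E0_def E1_def)
      qed
      show ?thesis unfolding proj_unif_hyperbolic_def
        using c1 c2 c3 c4 c5 c6 by blast
    qed
    ultimately show ?thesis using sd by simp
  qed
qed

end
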